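(* Let $Q\ge1$, $D\ge1$, and for $q=1,\dots,Q$ let $\alpha_q\ge0$ with $\sum_{q=1}^Q\alpha_q=1$, $\boldsymbol\mu_{q1},\boldsymbol\mu_{q2}\in\mathbb{R}^D$, $\boldsymbol\sigma_{q1}^2,\boldsymbol\sigma_{q2}^2\in\mathbb{R}^D$ with positive entries, and $\rho_q\in[-1,1]$. Let $p_{\mathrm{ngsm}}$ and $k_{\mathrm{ngsm}}$ be the NG-SM spectral density and kernel defined in the context. Let $L$ be an even positive integer and let $[\mathbf{w}_1^{(l)};\mathbf{w}_2^{(l)}]$, $l=1,\dots,L/2$, be i.i.d. random vectors in $\mathbb{R}^{2D}$ drawn from $p_{\mathrm{ngsm}}(\mathbf{w}_1,\mathbf{w}_2)$. Define the random feature map $\phi:\mathbb{R}^D\to\mathbb{R}^L$ by \[ \phi(\mathbf{x})=\sqrt{\tfrac{1}{2L}}\begin{bmatrix}\big(\cos(\mathbf{w}_1^{(l)\top}\mathbf{x})+\cos(\mathbf{w}_2^{(l)\top}\mathbf{x})\big)_{l=1}^{L/2}\\ \big(\sin(\mathbf{w}_1^{(l)\top}\mathbf{x})+\sin(\mathbf{w}_2^{(l)\top}\mathbf{x})\big)_{l=1}^{L/2}\end{bmatrix}. \] Then $\phi(\mathbf{x}_1)^\top\phi(\mathbf{x}_2)$ is an unbiased estimator of $k_{\mathrm{ngsm}}(\mathbf{x}_1,\mathbf{x}_2)$, i.e. $\mathbb{E}[\phi(\mathbf{x}_1)^\top\phi(\mathbf{x}_2)]=k_{\mathrm{ngsm}}(\mathbf{x}_1,\mathbf{x}_2)$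 for all $\mathbf{x}_1,\mathbf{x}_2\in\mathbb{R}^D$.
   Context: For each $q$, set $\boldsymbol\Sigma_1=\operatorname{diag}(\boldsymbol\sigma_{q1}^2)$, $\boldsymbol\Sigma_2=\operatorname{diag}(\boldsymbol\sigma_{q2}^2)$, $\boldsymbol\Sigma_c=\rho_q\operatorname{diag}(\boldsymbol\sigma_{q1})\operatorname{diag}(\boldsymbol\sigma_{q2})$ (index $q$ suppressed), and let $\mathcal{N}_q$ denote the Gaussian density on $\mathbb{R}^{2D}$ with mean $(\boldsymbol\mu_{q1},\boldsymbol\mu_{q2})$ and covariance $\begin{bmatrix}\boldsymbol\Sigma_1&\boldsymbol\Sigma_c^\top\\ \boldsymbol\Sigma_c&\boldsymbol\Sigma_2\end{bmatrix}$. Define $s_q(\mathbf{w}_1,\mathbf{w}_2)=\tfrac12\mathcal{N}_q(\mathbf{w}_1,\mathbf{w}_2)+\tfrac12\mathcal{N}_q(-\mathbf{w}_1,-\mathbf{w}_2)$ and $p_{\mathrm{ngsm}}(\mathbf{w}_1,\mathbf{w}_2)=\sum_{q=1}^Q\alpha_q s_q(\mathbf{w}_1,\mathbf{w}_2)$. The NG-SM kernel is \[ \begin{aligned} k_{\mathrm{ngsm}}(\mathbf{x}_1,\mathbf{x}_2)=\frac14\sum_{q=1}^Q\alpha_q\Big[&\exp\!\big(-\tfrac12(\mathbf{x}_1^\top\boldsymbol\Sigma_1\mathbf{x}_1-2\mathbf{x}_1^\top\boldsymbol\Sigma_c\mathbf{x}_2+\mathbf{x}_2^\top\boldsymbol\Sigma_2\mathbf{x}_2)\big)\cos(\boldsymbol\mu_{q1}^\top\mathbf{x}_1-\boldsymbol\mu_{q2}^\top\mathbf{x}_2)\\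 &+\exp\!\big(-\tfrac12(\mathbf{x}_2^\top\boldsymbol\Sigma_1\mathbf{x}_2-2\mathbf{x}_1^\top\boldsymbol\Sigma_c\mathbf{x}_2+\mathbf{x}_1^\top\boldsymbol\Sigma_2\mathbf{x}_1)\big)\cos(\boldsymbol\mu_{q1}^\top\mathbf{x}_2-\boldsymbol\mu_{q2}^\top\mathbf{x}_1)\\ &+\exp\!\big(-\tfrac12(\mathbf{x}_1-\mathbf{x}_2)^\top\boldsymbol\Sigma_1(\mathbf{x}_1-\mathbf{x}_2)\big)\cos(\boldsymbol\mu_{q1}^\top(\mathbf{x}_1-\mathbf{x}_2))\\ &+\exp\!\big(-\tfrac12(\mathbf{x}_1-\mathbf{x}_2)^\top\boldsymbol\Sigma_2(\mathbf{x}_1-\mathbf{x}_2)\big)\cos(\boldsymbol\mu_{q2}^\top(\mathbf{x}_1-\mathbf{x}_2))\Big]. \end{aligned} \] *)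

theory Defs
  imports "HOL-Analysis.Analysis" "HOL-Probability.Probability"
begin

definition diagm :: "real^'n \<Rightarrow> real^'n^'n" where
  "diagm v = (\<chi> i j. if i = j then v $ i else 0)"

definition stack :: "real^'d \<Rightarrow> real^'d \<Rightarrow> real^('d + 'd)" where
  "stack a b = (\<chi> k. case k of Inl i \<Rightarrow> a $ i | Inr i \<Rightarrow> b $ i)"

definition top_part :: "real^('d + 'd) \<Rightarrow> real^'d" where
  "top_part w = (\<chi> i. w $ Inl i)"

definition bot_part :: "real^('d + 'd) \<Rightarrow> real^'d" where
  "bot_part w = (\<chi> i. w $ Inr i)"

definition block :: "real^'d^'d \<Rightarrow> real^'d^'d \<Rightarrow> real^'d^'d \<Rightarrow> real^'d^'d \<Rightarrow> real^('d+'d)^('d+'d)" where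
  "block A B C E = (\<chi> r c. case (r, c) of
       (Inl i, Inl j) \<Rightarrow> A $ i $ j | (Inl i, Inr j) \<Rightarrow> B $ i $ j
     | (Inr i, Inl j) \<Rightarrow> C $ i $ j | (Inr i, Inr j) \<Rightarrow> E $ i $ j)"

definition gauss_density :: "real^'n \<Rightarrow> real^'n^'n \<Rightarrow> real^'n \<Rightarrow> real" where
  "gauss_density m C w =
     exp (- (1/2) * ((w - m) \<bullet> (matrix_inv C *v (w - m)))) / sqrt ((2 * pi) ^ CARD('n) * det C)"

text \<open>Parameters: sd1 q = \<sigma>_{q1}^2 (vector of variances), sd2 q = \<sigma>_{q2}^2.\<close>
definition Sig1 :: "(nat \<Rightarrow> real^'d) \<Rightarrow> nat \<Rightarrow> real^'d^'d" where
  "Sig1 s1 q = diagm (s1 q)"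

definition Sig2 :: "(nat \<Rightarrow> real^'d) \<Rightarrow> nat \<Rightarrow> real^'d^'d" where
  "Sig2 s2 q = diagm (s2 q)"

definition Sigc :: "(nat \<Rightarrow> real) \<Rightarrow> (nat \<Rightarrow> real^'d) \<Rightarrow> (nat \<Rightarrow> real^'d) \<Rightarrow> nat \<Rightarrow> real^'d^'d" where
  "Sigc rho s1 s2 q = rho q *\<^sub>R (diagm (\<chi> i. sqrt (s1 q $ i)) ** diagm (\<chi> i. sqrt (s2 q $ i)))"

definition Nq :: "(nat \<Rightarrow> real^'d) \<Rightarrow> (nat \<Rightarrow> real^'d) \<Rightarrow> (nat \<Rightarrow> real^'d) \<Rightarrow> (nat \<Rightarrow> real^'d)
     \<Rightarrow> (nat \<Rightarrow> real) \<Rightarrow> nat \<Rightarrow> real^'d \<Rightarrow> real^'d \<Rightarrow> real" where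
  "Nq mu1 mu2 s1 s2 rho q w1 w2 =
     gauss_density (stack (mu1 q) (mu2 q))
       (block (Sig1 s1 q) (transpose (Sigc rho s1 s2 q)) (Sigc rho s1 s2 q) (Sig2 s2 q))
       (stack w1 w2)"

definition sq :: "(nat \<Rightarrow> real^'d) \<Rightarrow> (nat \<Rightarrow> real^'d) \<Rightarrow> (nat \<Rightarrow> real^'d) \<Rightarrow> (nat \<Rightarrow> real^'d)
     \<Rightarrow> (nat \<Rightarrow> real) \<Rightarrow> nat \<Rightarrow> real^'d \<Rightarrow> real^'d \<Rightarrow> real" where
  "sq mu1 mu2 s1 s2 rho q w1 w2 =
     (1/2) * Nq mu1 mu2 s1 s2 rho q w1 w2 + (1/2) * Nq mu1 mu2 s1 s2 rho q (- w1) (- w2)"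

definition p_ngsm :: "nat \<Rightarrow> (nat \<Rightarrow> real) \<Rightarrow> (nat \<Rightarrow> real^'d) \<Rightarrow> (nat \<Rightarrow> real^'d) \<Rightarrow> (nat \<Rightarrow> real^'d)
     \<Rightarrow> (nat \<Rightarrow> real^'d) \<Rightarrow> (nat \<Rightarrow> real) \<Rightarrow> real^'d \<Rightarrow> real^'d \<Rightarrow> real" where
  "p_ngsm Q alpha mu1 mu2 s1 s2 rho w1 w2 =
     (\<Sum>q = 1..Q. alpha q * sq mu1 mu2 s1 s2 rho q w1 w2)"

definition k_ngsm :: "nat \<Rightarrow> (nat \<Rightarrow> real) \<Rightarrow> (nat \<Rightarrow> real^'d) \<Rightarrow> (nat \<Rightarrow> real^'d) \<Rightarrow> (nat \<Rightarrow> real^'d)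
     \<Rightarrow> (nat \<Rightarrow> real^'d) \<Rightarrow> (nat \<Rightarrow> real) \<Rightarrow> real^'d \<Rightarrow> real^'d \<Rightarrow> real" where
  "k_ngsm Q alpha mu1 mu2 s1 s2 rho x1 x2 =
     (1/4) * (\<Sum>q = 1..Q. alpha q *
       (let S1 = Sig1 s1 q; S2 = Sig2 s2 q; Sc = Sigc rho s1 s2 q in
          exp (- (1/2) * (x1 \<bullet> (S1 *v x1) - 2 * (x1 \<bullet> (Sc *v x2)) + x2 \<bullet> (S2 *v x2)))
            * cos (mu1 q \<bullet> x1 - mu2 q \<bullet> x2)
        + exp (- (1/2) * (x2 \<bullet> (S1 *v x2) - 2 * (x1 \<bullet> (Sc *v x2)) + x1 \<bullet> (S2 *v x1)))
            * cos (mu1 q \<bullet> x2 - mu2 q \<bullet> x1)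
        + exp (- (1/2) * ((x1 - x2) \<bullet> (S1 *v (x1 - x2)))) * cos (mu1 q \<bullet> (x1 - x2))
        + exp (- (1/2) * ((x1 - x2) \<bullet> (S2 *v (x1 - x2)))) * cos (mu2 q \<bullet> (x1 - x2))))"

text \<open>Random feature map phi(x) in R^L, as a function on indices k = 0..L-1
  (k < L/2: cosine block with l = k+1; k >= L/2: sine block with l = k - L/2 + 1).
  W l = [w1^(l); w2^(l)] for l = 1..L/2.\<close>
definition phi :: "nat \<Rightarrow> (nat \<Rightarrow> real^('d+'d)) \<Rightarrow> real^'d \<Rightarrow> nat \<Rightarrow> real" where
  "phi L W x k = sqrt (1 / (2 * real L)) *
     (if k < L div 2 then
        cos (top_part (W (k + 1)) \<bullet> x) + cos (bot_part (W (k + 1)) \<bullet> x)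
      else
        sin (top_part (W (k - L div 2 + 1)) \<bullet> x) + sin (bot_part (W (k - L div 2 + 1)) \<bullet> x))"

end

theory Submission
  imports Defs
begin

lemma sum_UNIV_Plus:
  fixes f :: "('a::finite + 'b::finite) \<Rightarrow> 'c::comm_monoid_add"
  shows "(\<Sum>k\<in>UNIV. f k) = (\<Sum>i\<in>UNIV. f (Inl i)) + (\<Sum>i\<in>UNIV. f (Inr i))"
proof -
  show ?thesis using sum.Plus[of "UNIV::'a set" "UNIV::'b set" f] by (simp add: comp_def)
qed

lemma prod_UNIV_Plus:
  fixes f :: "('a::finite + 'b::finite) \<Rightarrow> 'c::comm_monoid_mult"
  shows "(\<Prod>k\<in>UNIV. f k) = (\<Prod>i\<in>UNIV. f (Inl i)) * (\<Prod>i\<in>UNIV. f (Inr i))"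
proof -
  show ?thesis using prod.Plus[of "UNIV::'a set" "UNIV::'b set" f] by (simp add: comp_def)
qed

lemma block_nth[simp]:
  "block A B C E $ Inl i $ Inl j = A $ i $ j"
  "block A B C E $ Inl i $ Inr j = B $ i $ j"
  "block A B C E $ Inr i $ Inl j = C $ i $ j"
  "block A B C E $ Inr i $ Inr j = E $ i $ j"
  by (simp_all add: block_def)

lemma stack_nth[simp]: "stack a b $ Inl i = a $ i" "stack a b $ Inr i = b $ i"
  by (simp_all add: stack_def)

lemma top_part_nth[simp]: "top_part w $ i = w $ Inl i" and bot_part_nth[simp]: "bot_part w $ i = w $ Inr i"
  by (simp_all add: top_part_def bot_part_def)

lemma stack_top_bot: "stack (top_part w) (bot_part w) = w"
  by (simp add: vec_eq_iff stack_def split: sum.split)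

lemma block_eq_iff: "M = block A B C E \<longleftrightarrow> (\<forall>i j. M $ Inl i $ Inl j = A $ i $ j \<and> M $ Inl i $ Inr j = B $ i $ j
   \<and> M $ Inr i $ Inl j = C $ i $ j \<and> M $ Inr i $ Inr j = E $ i $ j)"
  apply (auto simp: vec_eq_iff)
  subgoal for i j by (cases i; cases j) auto
  done

lemma block_mult:
  "block A B C E ** block A' B' C' E' =
   block (A ** A' + B ** C') (A ** B' + B ** E') (C ** A' + E ** C') (C ** B' + E ** E')"
  by (simp add: block_eq_iff matrix_matrix_mult_def sum_UNIV_Plus sum.distrib)

lemma block_mulv:
  "block A B C E *v stack x y = stack (A *v x + B *v y) (C *v x + E *v y)"
  by (simp add: vec_eq_iff matrix_vector_mult_def sum_UNIV_Plus stack_def split: sum.split)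


lemma diagm_nth[simp]: "diagm v $ i $ j = (if i = j then v $ i else 0)"
  by (simp add: diagm_def)

lemma diagm_mult: "diagm u ** diagm v = diagm (\<chi> i. u $ i * v $ i)"
proof -
  have "(\<Sum>k\<in>UNIV. (if i = k then u $ i else 0) * (if k = j then v $ k else 0)) = (if i = j then u $ i * v $ i else 0)" for i j
  proof -
    have "(\<Sum>k\<in>UNIV. (if i = k then u $ i else 0) * (if k = j then v $ k else 0)) = (\<Sum>k\<in>UNIV. if i = k then (if i = j then u $ i * v $ i else 0) else 0)"
      by (rule sum.cong) auto
    then show ?thesis by simp
  qed
  then show ?thesis by (simp add: vec_eq_iff matrix_matrix_mult_def)
qed

lemma diagm_add: "diagm u + diagm v = diagm (u + v)"
  by (simp add: vec_eq_iff)

lemma diagm_transpose: "transpose (diagm u) = diagm u"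
  unfolding transpose_def vec_eq_iff by auto

lemma diagm_mulv: "diagm u *v x = (\<chi> i. u $ i * x $ i)"
proof -
  have "(\<Sum>j\<in>UNIV. (if i = j then u $ i else 0) * x $ j) = u $ i * x $ i" for i
  proof -
    have "(\<Sum>j\<in>UNIV. (if i = j then u $ i else 0) * x $ j) = (\<Sum>j\<in>UNIV. if i = j then u $ i * x $ j else 0)"
      by (rule sum.cong) auto
    then show ?thesis by simp
  qed
  then show ?thesis by (simp add: vec_eq_iff matrix_vector_mult_def)
qed

lemma mat1_diagm: "(mat 1 :: real^'n^'n) = diagm (\<chi> i. 1)"
  by (simp add: vec_eq_iff mat_def)

lemma zero_diagm: "(0::real^'n::finite^'n) = diagm 0"
  by (simp add: vec_eq_iff)

lemma scaleR_diagm: "c *\<^sub>R diagm (u::real^'n::finite) = diagm (c *\<^sub>R u)"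
  by (simp add: vec_eq_iff)

lemma block_transpose:
  "transpose (block A B C E) = block (transpose A) (transpose C) (transpose B) (transpose E)"
  by (simp add: block_eq_iff transpose_def)

lemma mat1_block: "(mat 1 :: real^('d::finite+'d)^('d+'d)) = block (mat 1) 0 0 (mat 1)"
  by (simp add: block_eq_iff mat_def)

lemma inner_stack: "stack a b \<bullet> stack c d = a \<bullet> c + b \<bullet> d"
  by (simp add: inner_vec_def sum_UNIV_Plus)

definition CB :: "real^'d \<Rightarrow> real^'d \<Rightarrow> real^'d \<Rightarrow> real^('d+'d)^('d+'d)" where
  "CB a b c = block (diagm a) (diagm c) (diagm c) (diagm b)"

lemma det_lower_block:
  fixes pp g h :: "real^'d"
  shows "det (block (diagm pp) 0 (diagm g) (diagm h)) = (\<Prod>i\<in>UNIV. pp $ i * h $ i)"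
proof -
  let ?L = "block (diagm pp) 0 (diagm g) (diagm h)"
  have key: "(\<Prod>k\<in>UNIV. ?L $ k $ \<pi> k) = 0" if pi: "\<pi> permutes UNIV" "\<pi> \<noteq> id" for \<pi>
  proof (rule ccontr)
    assume "(\<Prod>k\<in>UNIV. ?L $ k $ \<pi> k) \<noteq> 0"
    then have nz: "?L $ k $ \<pi> k \<noteq> 0" for k by auto
    have l: "\<pi> (Inl i) = Inl i" for i
    proof (cases "\<pi> (Inl i)")
      case (Inl j) with nz[of "Inl i"] show ?thesis by (auto split: if_splits)
    next
      case (Inr j) with nz[of "Inl i"] show ?thesis by auto
    qed
    have r: "\<pi> (Inr i) = Inr i" for i
    proof (cases "\<pi> (Inr i)")
      case (Inl j)
      with nz[of "Inr i"] have "j = i" by (auto split: if_splits)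
      with Inl l[of i] have "\<pi> (Inr i) = \<pi> (Inl i)" by simp
      then have "Inr i = (Inl i :: 'd + 'd)" using permutes_inj[OF pi(1)] by (auto dest: injD)
      then show ?thesis by simp
    next
      case (Inr j) with nz[of "Inr i"] show ?thesis by (auto split: if_splits)
    qed
    have "\<pi> = id"
    proof
      fix k show "\<pi> k = id k" by (cases k) (simp_all add: l r)
    qed
    with pi(2) show False by simp
  qed
  have "det ?L = (\<Sum>\<pi>\<in>{\<pi>. \<pi> permutes UNIV}. of_int (sign \<pi>) * (\<Prod>k\<in>UNIV. ?L $ k $ \<pi> k))"
    by (simp add: det_def)
  also have "\<dots> = (\<Sum>\<pi>\<in>{\<pi>. \<pi> permutes (UNIV::('d+'d) set)}. if \<pi> = id then (\<Prod>k\<in>UNIV. ?L $ k $ k) else 0)"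
    apply (rule sum.cong[OF refl])
    apply (auto simp: key sign_id)
    done
  also have "\<dots> = (\<Prod>k\<in>UNIV. ?L $ k $ k)"
    by (simp add: permutes_id)
  also have "\<dots> = (\<Prod>i\<in>UNIV. pp $ i * h $ i)"
    by (simp add: prod_UNIV_Plus prod.distrib)
  finally show ?thesis .
qed

lemma CB_factor:
  fixes a b c :: "real^'d"
  assumes a: "\<And>i. a $ i > 0" and d: "\<And>i. (c $ i)^2 \<le> a $ i * b $ i"
  defines "A \<equiv> block (diagm (\<chi> i. sqrt (a $ i))) 0 (diagm (\<chi> i. c $ i / sqrt (a $ i)))
                  (diagm (\<chi> i. sqrt (b $ i - (c $ i)^2 / a $ i)))"
  shows "CB a b c = A ** transpose A"
proof -
  have f2: "a $ i \<noteq> 0" for i using a[of i] by simp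
  have f1: "\<bar>a $ i\<bar> = a $ i" for i using a[of i] by simp
  have g: "b $ i - (c $ i)^2 / a $ i \<ge> 0" for i using a[of i] d[of i] by (simp add: field_simps)
  have f3: "\<bar>b $ i - (c $ i)^2 / a $ i\<bar> = b $ i - (c $ i)^2 / a $ i" for i using g[of i] by simp
  have f4: "c $ i * c $ i / a $ i + (b $ i - (c $ i)^2 / a $ i) = b $ i" for i
    using f2[of i] by (simp add: field_simps power2_eq_square)
  have "A ** transpose A = CB a b c"
    unfolding A_def CB_def block_transpose diagm_transpose block_mult zero_diagm diagm_mult diagm_add
    unfolding block_eq_iff
    by (simp add: f1 f2 f3 f4)
  then show ?thesis by simp
qed

lemma det_CB:
  fixes a b c :: "real^'d"
  assumes a: "\<And>i. a $ i > 0" and d: "\<And>i. (c $ i)^2 \<le> a $ i * b $ i"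
  shows "det (CB a b c) = (\<Prod>i\<in>UNIV. a $ i * b $ i - (c $ i)^2)"
proof -
  have g: "b $ i - (c $ i)^2 / a $ i \<ge> 0" for i using a[of i] d[of i] by (simp add: field_simps)
  have "det (CB a b c) = (\<Prod>i\<in>UNIV. sqrt (a $ i) * sqrt (b $ i - (c $ i)^2 / a $ i)) *
      (\<Prod>i\<in>UNIV. sqrt (a $ i) * sqrt (b $ i - (c $ i)^2 / a $ i))"
    by (simp only: CB_factor[OF a d] det_mul det_transpose det_lower_block vec_lambda_beta)
  also have "\<dots> = (\<Prod>i\<in>UNIV. (sqrt (a $ i) * sqrt (b $ i - (c $ i)^2 / a $ i)) * (sqrt (a $ i) * sqrt (b $ i - (c $ i)^2 / a $ i)))"
    by (simp add: prod.distrib)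
  also have "\<dots> = (\<Prod>i\<in>UNIV. a $ i * b $ i - (c $ i)^2)"
  proof (rule prod.cong[OF refl])
    fix i
    have "(sqrt (a $ i) * sqrt (b $ i - (c $ i)^2 / a $ i)) * (sqrt (a $ i) * sqrt (b $ i - (c $ i)^2 / a $ i))
       = a $ i * (b $ i - (c $ i)^2 / a $ i)"
    proof -
      have xy: "\<And>x y::real. x * y * (x * y) = (x * x) * (y * y)" by (simp add: algebra_simps)
      have s1: "sqrt (a $ i) * sqrt (a $ i) = a $ i" using a[of i] by simp
      have s2: "sqrt (b $ i - (c $ i)^2 / a $ i) * sqrt (b $ i - (c $ i)^2 / a $ i) = b $ i - (c $ i)^2 / a $ i"
        using g[of i] by simp
      show ?thesis by (simp only: xy s1 s2)
    qed
    also have "\<dots> = a $ i * b $ i - (c $ i)^2" using a[of i] by (simp add: field_simps)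
    finally show "(sqrt (a $ i) * sqrt (b $ i - (c $ i)^2 / a $ i)) * (sqrt (a $ i) * sqrt (b $ i - (c $ i)^2 / a $ i))
       = a $ i * b $ i - (c $ i)^2" .
  qed
  finally show ?thesis .
qed

lemma matrix_inv_eqI:
  fixes A B :: "real^'n^'n"
  assumes "A ** B = mat 1" "B ** A = mat 1"
  shows "matrix_inv A = B"
proof -
  have "A ** matrix_inv A = mat 1 \<and> matrix_inv A ** A = mat 1"
    unfolding matrix_inv_def by (rule someI[of _ B]) (use assms in simp)
  then have "matrix_inv A = matrix_inv A ** (A ** B)" using assms by (simp add: matrix_mul_rid)
  also have "\<dots> = (matrix_inv A ** A) ** B" by (simp add: matrix_mul_assoc)
  also have "\<dots> = B" using \<open>_ \<and> _\<close> by (simp add: matrix_mul_lid)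
  finally show ?thesis .
qed

definition Dl :: "real^'d \<Rightarrow> real^'d \<Rightarrow> real^'d \<Rightarrow> real^'d" where
  "Dl a b c = (\<chi> i. a $ i * b $ i - (c $ i)^2)"

lemma matrix_inv_CB:
  fixes a b c :: "real^'d"
  assumes d: "\<And>i. (c $ i)^2 < a $ i * b $ i"
  shows "matrix_inv (CB a b c) =
     CB (\<chi> i. b $ i / Dl a b c $ i) (\<chi> i. a $ i / Dl a b c $ i) (\<chi> i. - c $ i / Dl a b c $ i)"
proof (rule matrix_inv_eqI)
  have nz: "a $ i * b $ i - (c $ i)^2 \<noteq> 0" for i using d[of i] by simp
  have e: "a $ i * (b $ i / (a $ i * b $ i - (c $ i)^2)) + c $ i * (- c $ i / (a $ i * b $ i - (c $ i)^2)) = 1 \<and>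
           a $ i * (- c $ i / (a $ i * b $ i - (c $ i)^2)) + c $ i * (a $ i / (a $ i * b $ i - (c $ i)^2)) = 0 \<and>
           c $ i * (b $ i / (a $ i * b $ i - (c $ i)^2)) + b $ i * (- c $ i / (a $ i * b $ i - (c $ i)^2)) = 0 \<and>
           c $ i * (- c $ i / (a $ i * b $ i - (c $ i)^2)) + b $ i * (a $ i / (a $ i * b $ i - (c $ i)^2)) = 1 \<and>
           b $ i / (a $ i * b $ i - (c $ i)^2) * a $ i + (- c $ i / (a $ i * b $ i - (c $ i)^2)) * c $ i = 1 \<and>
           b $ i / (a $ i * b $ i - (c $ i)^2) * c $ i + (- c $ i / (a $ i * b $ i - (c $ i)^2)) * b $ i = 0 \<and>
           (- c $ i / (a $ i * b $ i - (c $ i)^2)) * a $ i + a $ i / (a $ i * b $ i - (c $ i)^2) * c $ i = 0 \<and>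
           (- c $ i / (a $ i * b $ i - (c $ i)^2)) * c $ i + a $ i / (a $ i * b $ i - (c $ i)^2) * b $ i = 1" for i
  proof -
    define D where "D = a $ i * b $ i - (c $ i)^2"
    have D: "D \<noteq> 0" using nz[of i] by (simp add: D_def)
    have "a $ i * (b $ i / D) + c $ i * (- c $ i / D) = (a $ i * b $ i - (c $ i)^2) / D"
         "a $ i * (- c $ i / D) + c $ i * (a $ i / D) = 0"
         "c $ i * (b $ i / D) + b $ i * (- c $ i / D) = 0"
         "c $ i * (- c $ i / D) + b $ i * (a $ i / D) = (a $ i * b $ i - (c $ i)^2) / D"
         "b $ i / D * a $ i + (- c $ i / D) * c $ i = (a $ i * b $ i - (c $ i)^2) / D"
         "b $ i / D * c $ i + (- c $ i / D) * b $ i = 0"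
         "(- c $ i / D) * a $ i + a $ i / D * c $ i = 0"
         "(- c $ i / D) * c $ i + a $ i / D * b $ i = (a $ i * b $ i - (c $ i)^2) / D"
      by (simp_all add: add_divide_distrib[symmetric] diff_divide_distrib[symmetric] algebra_simps power2_eq_square)
    then show ?thesis using D unfolding D_def[symmetric] by simp
  qed
  note e1 = e[THEN conjunct1] and e2 = e[THEN conjunct2, THEN conjunct1]
    and e3 = e[THEN conjunct2, THEN conjunct2, THEN conjunct1]
    and e4 = e[THEN conjunct2, THEN conjunct2, THEN conjunct2, THEN conjunct1]
    and e5 = e[THEN conjunct2, THEN conjunct2, THEN conjunct2, THEN conjunct2, THEN conjunct1]
    and e6 = e[THEN conjunct2, THEN conjunct2, THEN conjunct2, THEN conjunct2, THEN conjunct2, THEN conjunct1]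
    and e7 = e[THEN conjunct2, THEN conjunct2, THEN conjunct2, THEN conjunct2, THEN conjunct2, THEN conjunct2, THEN conjunct1]
    and e8 = e[THEN conjunct2, THEN conjunct2, THEN conjunct2, THEN conjunct2, THEN conjunct2, THEN conjunct2, THEN conjunct2]
  show "CB a b c ** CB (\<chi> i. b $ i / Dl a b c $ i) (\<chi> i. a $ i / Dl a b c $ i) (\<chi> i. - c $ i / Dl a b c $ i) = mat 1"
    unfolding CB_def block_mult diagm_mult diagm_add mat1_block mat1_diagm zero_diagm Dl_def
    by (simp only: vec_lambda_beta plus_vec_def zero_vec_def e1 e2 e3 e4)
  show "CB (\<chi> i. b $ i / Dl a b c $ i) (\<chi> i. a $ i / Dl a b c $ i) (\<chi> i. - c $ i / Dl a b c $ i) ** CB a b c = mat 1"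
    unfolding CB_def block_mult diagm_mult diagm_add mat1_block mat1_diagm zero_diagm Dl_def
    by (simp only: vec_lambda_beta plus_vec_def zero_vec_def e5 e6 e7 e8)
qed

lemma CB_mulv: "CB a b c *v stack x y = stack (\<chi> i. a $ i * x $ i + c $ i * y $ i) (\<chi> i. c $ i * x $ i + b $ i * y $ i)"
  unfolding CB_def block_mulv diagm_mulv by (simp add: plus_vec_def)

lemma quad_CB: "stack x y \<bullet> (CB a b c *v stack x y) =
   (\<Sum>i\<in>UNIV. a $ i * (x $ i)^2 + 2 * c $ i * x $ i * y $ i + b $ i * (y $ i)^2)"
  apply (simp only: CB_mulv inner_stack)
  apply (simp only: inner_vec_def sum.distrib[symmetric])
  apply (rule sum.cong)
   apply (simp_all add: algebra_simps power2_eq_square)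
  done

definition pv :: "('d \<Rightarrow> real \<times> real) \<Rightarrow> real^('d::finite+'d)" where
  "pv f = stack (\<chi> i. fst (f i)) (\<chi> i. snd (f i))"

lemma pv_nth[simp]: "pv f $ Inl i = fst (f i)" "pv f $ Inr i = snd (f i)"
  by (simp_all add: pv_def)

lemma prod_Basis_vec: "(\<Prod>b\<in>(Basis :: (real^'n) set). f b) = (\<Prod>k\<in>UNIV. f (axis k 1))"
proof -
  have B: "(Basis :: (real^'n) set) = range (\<lambda>k. axis k 1)"
    by (auto simp: Basis_vec_def)
  have "inj (\<lambda>k::'n. axis k (1::real))" by (auto intro: injI simp: axis_eq_axis)
  then show ?thesis unfolding B by (simp add: prod.reindex)
qed

lemma measurable_pv[measurable]: "pv \<in> Pi\<^sub>M UNIV (\<lambda>_. lborel) \<rightarrow>\<^sub>M (borel :: (real^('d::finite+'d)) measure)"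
proof -
  have "(\<lambda>f. pv f $ k) \<in> borel_measurable (Pi\<^sub>M UNIV (\<lambda>_::'d. lborel :: (real \<times> real) measure))" for k
  proof (cases k)
    case (Inl i)
    have "(\<lambda>f. f i) \<in> Pi\<^sub>M UNIV (\<lambda>_::'d. lborel :: (real \<times> real) measure) \<rightarrow>\<^sub>M borel"
      using measurable_component_singleton[of i UNIV "\<lambda>_. lborel :: (real \<times> real) measure"] by simp
    moreover have "fst \<in> borel_measurable (borel :: (real \<times> real) measure)"
      by (intro borel_measurable_continuous_onI continuous_intros)
    ultimately show ?thesis using Inl measurable_compose by fastforce
  next
    case (Inr i)
    have "(\<lambda>f. f i) \<in> Pi\<^sub>M UNIV (\<lambda>_::'d. lborel :: (real \<times> real) measure) \<rightarrow>\<^sub>M borel"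
      using measurable_component_singleton[of i UNIV "\<lambda>_. lborel :: (real \<times> real) measure"] by simp
    moreover have "snd \<in> borel_measurable (borel :: (real \<times> real) measure)"
      by (intro borel_measurable_continuous_onI continuous_intros)
    ultimately show ?thesis using Inr measurable_compose by fastforce
  qed
  then show ?thesis
    by (subst borel_measurable_euclidean_space) (auto simp: Basis_vec_def inner_axis)
qed

lemma lborel_pv: "(lborel :: (real^('d::finite+'d)) measure) = distr (Pi\<^sub>M UNIV (\<lambda>_. lborel)) borel pv"
proof (rule lborel_eqI)
  interpret product_sigma_finite "\<lambda>_::'d. lborel :: (real \<times> real) measure"
    by (simp add: product_sigma_finite_def lborel.sigma_finite_measure_axioms)
  fix l u :: "real^('d+'d)"
  assume le: "\<And>b. b \<in> Basis \<Longrightarrow> l \<bullet> b \<le> u \<bullet> b"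
  have le': "l $ k \<le> u $ k" for k using le[of "axis k 1"] by (simp add: inner_axis)
  have pre: "pv -` box l u \<inter> space (Pi\<^sub>M UNIV (\<lambda>_::'d. lborel :: (real \<times> real) measure)) =
      (\<Pi>\<^sub>E i\<in>UNIV. {l $ Inl i <..< u $ Inl i} \<times> {l $ Inr i <..< u $ Inr i})"
  proof -
    have "pv f \<in> box l u \<longleftrightarrow> (\<forall>i. f i \<in> {l $ Inl i <..< u $ Inl i} \<times> {l $ Inr i <..< u $ Inr i})" for f
    proof -
      have "pv f \<in> box l u \<longleftrightarrow> (\<forall>k. l $ k < pv f $ k \<and> pv f $ k < u $ k)" by (simp add: mem_box_cart)
      also have "\<dots> \<longleftrightarrow> (\<forall>i. l $ Inl i < pv f $ Inl i \<and> pv f $ Inl i < u $ Inl i) \<and>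
                         (\<forall>i. l $ Inr i < pv f $ Inr i \<and> pv f $ Inr i < u $ Inr i)"
        by (metis sum.exhaust)
      also have "\<dots> \<longleftrightarrow> (\<forall>i. f i \<in> {l $ Inl i <..< u $ Inl i} \<times> {l $ Inr i <..< u $ Inr i})"
        by (auto simp: mem_Times_iff)
      finally show ?thesis .
    qed
    then show ?thesis by (auto simp: space_PiM PiE_def extensional_def)
  qed
  have "emeasure (distr (Pi\<^sub>M UNIV (\<lambda>_. lborel)) borel pv) (box l u) =
        emeasure (Pi\<^sub>M UNIV (\<lambda>_::'d. lborel :: (real \<times> real) measure)) (\<Pi>\<^sub>E i\<in>UNIV. {l $ Inl i <..< u $ Inl i} \<times> {l $ Inr i <..< u $ Inr i})"
    by (simp add: emeasure_distr pre)
  also have "\<dots> = (\<Prod>i\<in>UNIV. emeasure (lborel :: (real \<times> real) measure) ({l $ Inl i <..< u $ Inl i} \<times> {l $ Inr i <..< u $ Inr i}))"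
    by (subst emeasure_PiM) (auto intro!: borel_open open_Times)
  also have "\<dots> = (\<Prod>i\<in>UNIV. ennreal ((u $ Inl i - l $ Inl i) * (u $ Inr i - l $ Inr i)))"
  proof (rule prod.cong[OF refl])
    fix i
    show "emeasure (lborel :: (real \<times> real) measure) ({l $ Inl i <..< u $ Inl i} \<times> {l $ Inr i <..< u $ Inr i}) =
        ennreal ((u $ Inl i - l $ Inl i) * (u $ Inr i - l $ Inr i))"
    proof -
      have "emeasure (lborel :: (real \<times> real) measure) ({l $ Inl i <..< u $ Inl i} \<times> {l $ Inr i <..< u $ Inr i})
         = emeasure (lborel \<Otimes>\<^sub>M lborel) ({l $ Inl i <..< u $ Inl i} \<times> {l $ Inr i <..< u $ Inr i})"
        by (simp add: lborel_prod)
      also have "\<dots> = emeasure lborel {l $ Inl i <..< u $ Inl i} * emeasure lborel {l $ Inr i <..< u $ Inr i}"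
        by (rule lborel.emeasure_pair_measure_Times) auto
      also have "\<dots> = ennreal ((u $ Inl i - l $ Inl i) * (u $ Inr i - l $ Inr i))"
        using le'[of "Inl i"] le'[of "Inr i"] by (simp add: ennreal_mult)
      finally show ?thesis .
    qed
  qed
  also have "\<dots> = ennreal (\<Prod>b\<in>Basis. (u - l) \<bullet> b)"
  proof -
    have "(\<Prod>b\<in>Basis. (u - l) \<bullet> b) = (\<Prod>k\<in>UNIV. u $ k - l $ k)"
      by (simp add: prod_Basis_vec inner_axis)
    also have "\<dots> = (\<Prod>i\<in>UNIV. (u $ Inl i - l $ Inl i) * (u $ Inr i - l $ Inr i))"
      by (simp add: prod_UNIV_Plus prod.distrib)
    finally show ?thesis using le' by (simp add: prod_ennreal)
  qed
  finally show "emeasure (distr (Pi\<^sub>M UNIV (\<lambda>_. lborel)) borel pv) (box l u) = (\<Prod>b\<in>Basis. (u - l) \<bullet> b)" .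
qed simp

lemma integral_prod_pairs:
  fixes H :: "'d::finite \<Rightarrow> real \<times> real \<Rightarrow> complex"
  assumes H: "\<And>i. integrable lborel (H i)"
  shows "integrable lborel (\<lambda>w::real^('d+'d). \<Prod>i\<in>UNIV. H i (w $ Inl i, w $ Inr i))"
    and "(\<integral>w. (\<Prod>i\<in>UNIV. H i (w $ Inl i, w $ Inr i)) \<partial>(lborel :: (real^('d+'d)) measure)) = (\<Prod>i\<in>UNIV. \<integral>z. H i z \<partial>lborel)"
proof -
  interpret product_sigma_finite "\<lambda>_::'d. lborel :: (real \<times> real) measure"
    by (simp add: product_sigma_finite_def lborel.sigma_finite_measure_axioms)
  have Hm: "H i \<in> borel_measurable borel" for i
    using borel_measurable_integrable[OF H[of i]] by simp
  have cm: "(\<lambda>w::real^('d+'d). (w $ Inl i, w $ Inr i)) \<in> borel_measurable borel" for i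
    by (intro borel_measurable_continuous_onI continuous_intros)
  have m: "(\<lambda>w::real^('d+'d). H i (w $ Inl i, w $ Inr i)) \<in> borel_measurable borel" for i
    using measurable_compose[OF cm Hm] by (simp add: comp_def)
  have Fm: "(\<lambda>w::real^('d+'d). \<Prod>i\<in>UNIV. H i (w $ Inl i, w $ Inr i)) \<in> borel_measurable borel"
    using m by (intro borel_measurable_prod) auto
  have comp: "(\<Prod>i\<in>UNIV. H i (pv f $ Inl i, pv f $ Inr i)) = (\<Prod>i\<in>UNIV. H i (f i))" for f
    by simp
  have int: "integrable (Pi\<^sub>M UNIV (\<lambda>_. lborel)) (\<lambda>f. \<Prod>i\<in>UNIV. H i (f i))"
    by (rule product_integrable_prod) (auto intro: H)
  show "integrable lborel (\<lambda>w::real^('d+'d). \<Prod>i\<in>UNIV. H i (w $ Inl i, w $ Inr i))"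
    apply (subst lborel_pv)
    apply (subst integrable_distr_eq)
    using Fm int by (simp_all add: comp)
  show "(\<integral>w. (\<Prod>i\<in>UNIV. H i (w $ Inl i, w $ Inr i)) \<partial>(lborel :: (real^('d+'d)) measure)) = (\<Prod>i\<in>UNIV. \<integral>z. H i z \<partial>lborel)"
    apply (subst lborel_pv)
    apply (subst integral_distr)
    using Fm by (simp_all add: comp product_integral_prod H)
qed

lemma std_normal_char:
  "(\<integral>x. complex_of_real (std_normal_density x) * iexp (t * x) \<partial>lborel) = complex_of_real (exp (- (t^2) / 2))"
proof -
  have "char std_normal_distribution t = complex_of_real (exp (- (t^2) / 2))"
    by (simp add: char_std_normal_distribution)
  moreover have "char std_normal_distribution t = (\<integral>x. std_normal_density x *\<^sub>R iexp (t * x) \<partial>lborel)"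
    unfolding char_def
    by (subst integral_density) (auto simp: normal_density_nonneg)
  ultimately show ?thesis by (simp add: scaleR_conv_of_real)
qed

lemma normal_iexp_integrable:
  assumes s: "\<sigma> > 0"
  shows "integrable lborel (\<lambda>y. complex_of_real (normal_density \<mu> \<sigma> y) * iexp (r * y))"
proof (rule Bochner_Integration.integrable_bound[OF integrable_normal_density[OF s, of \<mu>]])
  show "(\<lambda>y. complex_of_real (normal_density \<mu> \<sigma> y) * iexp (r * y)) \<in> borel_measurable lborel"
    unfolding measurable_lborel2 normal_density_def
    using s by (intro borel_measurable_continuous_onI continuous_intros) auto
  show "AE y in lborel. norm (complex_of_real (normal_density \<mu> \<sigma> y) * iexp (r * y)) \<le> norm (normal_density \<mu> \<sigma> y)"
    by (simp add: norm_mult)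
qed

lemma normal_char:
  assumes s: "\<sigma> > 0"
  shows "(\<integral>y. complex_of_real (normal_density \<mu> \<sigma> y) * iexp (r * y) \<partial>lborel) =
     iexp (r * \<mu>) * complex_of_real (exp (- (r^2 * \<sigma>^2) / 2))"
proof -
  have nd: "normal_density \<mu> \<sigma> (\<mu> + \<sigma> * z) = std_normal_density z / \<sigma>" for z
    using s by (simp add: normal_density_def real_sqrt_mult power_mult_distrib field_simps)
  have ie: "iexp (r * (\<mu> + \<sigma> * z)) = iexp (r * \<mu>) * iexp ((r * \<sigma>) * z)" for z
    by (simp add: algebra_simps exp_add[symmetric])
  have "(\<integral>y. complex_of_real (normal_density \<mu> \<sigma> y) * iexp (r * y) \<partial>lborel) =
      \<bar>\<sigma>\<bar> *\<^sub>R (\<integral>z. complex_of_real (normal_density \<mu> \<sigma> (\<mu> + \<sigma> * z)) * iexp (r * (\<mu> + \<sigma> * z)) \<partial>lborel)"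
    using s by (intro lborel_integral_real_affine) simp
  also have "\<dots> = \<sigma> *\<^sub>R (\<integral>z. (iexp (r * \<mu>) / complex_of_real \<sigma>) * (complex_of_real (std_normal_density z) * iexp ((r * \<sigma>) * z)) \<partial>lborel)"
  proof -
    have pt: "complex_of_real (normal_density \<mu> \<sigma> (\<mu> + \<sigma> * z)) * iexp (r * (\<mu> + \<sigma> * z)) =
       (iexp (r * \<mu>) / complex_of_real \<sigma>) * (complex_of_real (std_normal_density z) * iexp ((r * \<sigma>) * z))" for z
      unfolding nd ie using s by (simp add: field_simps)
    show ?thesis using s by (simp only: pt abs_of_pos)
  qed
  also have "\<dots> = \<sigma> *\<^sub>R ((iexp (r * \<mu>) / complex_of_real \<sigma>) * (\<integral>z. complex_of_real (std_normal_density z) * iexp ((r * \<sigma>) * z) \<partial>lborel))"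
    by simp
  also have "\<dots> = iexp (r * \<mu>) * complex_of_real (exp (- ((r * \<sigma>)^2) / 2))"
    using s by (simp only: std_normal_char) (simp add: scaleR_conv_of_real)
  finally show ?thesis by (simp add: power_mult_distrib)
qed

definition bvn :: "real \<Rightarrow> real \<Rightarrow> real \<Rightarrow> real \<Rightarrow> real \<Rightarrow> real \<times> real \<Rightarrow> real" where
  "bvn m1 m2 a b c z = exp (- (1/2) * ((b / (a * b - c^2)) * (fst z - m1)^2 + 2 * (- c / (a * b - c^2)) * (fst z - m1) * (snd z - m2)
       + (a / (a * b - c^2)) * (snd z - m2)^2)) / (2 * pi * sqrt (a * b - c^2))"

lemma bvn_factor:
  assumes a: "a > 0" and D: "a * b - c^2 > 0"
  shows "bvn m1 m2 a b c (x, y) = normal_density m1 (sqrt a) x * normal_density (m2 + c * (x - m1) / a) (sqrt ((a * b - c^2) / a)) y"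
proof -
  define D where "D = a * b - c^2"
  have Dp: "D > 0" using D by (simp add: D_def)
  have sq: "sqrt (2 * pi * a) * sqrt (2 * pi * (D / a)) = 2 * pi * sqrt D"
  proof -
    have "sqrt (2 * pi * a) * sqrt (2 * pi * (D / a)) = sqrt ((2 * pi)^2 * D)"
      using a by (simp add: real_sqrt_mult[symmetric] power2_eq_square field_simps)
    also have "\<dots> = 2 * pi * sqrt D" by (simp add: real_sqrt_mult)
    finally show ?thesis .
  qed
  have ex: "(b / D) * (x - m1)^2 + 2 * (- c / D) * (x - m1) * (y - m2) + (a / D) * (y - m2)^2
      = (x - m1)^2 / a + (y - (m2 + c * (x - m1) / a))^2 / (D / a)"
  proof -
    have b: "b = (D + c^2) / a" using a by (simp add: D_def field_simps)
    show ?thesis unfolding b using a Dp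
      by (simp add: field_simps power2_eq_square)
  qed
  have "bvn m1 m2 a b c (x, y) = exp (- (1/2) * ((x - m1)^2 / a + (y - (m2 + c * (x - m1) / a))^2 / (D / a))) / (sqrt (2 * pi * a) * sqrt (2 * pi * (D / a)))"
    unfolding bvn_def D_def[symmetric] fst_conv snd_conv ex sq ..
  also have "\<dots> = normal_density m1 (sqrt a) x * normal_density (m2 + c * (x - m1) / a) (sqrt (D / a)) y"
    using a Dp by (simp add: normal_density_def exp_add[symmetric] field_simps)
  finally show ?thesis by (simp add: D_def)
qed

lemma iexp_mult_iexp: "iexp u * iexp v = iexp (u + v)"
  by (simp add: exp_add[symmetric] algebra_simps)

lemma comb: "(iexp u * complex_of_real (exp p)) * (iexp v * complex_of_real (exp q)) =
   iexp (u + v) * complex_of_real (exp (p + q))"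
proof -
  have "(iexp u * complex_of_real (exp p)) * (iexp v * complex_of_real (exp q)) =
     (iexp u * iexp v) * (complex_of_real (exp p) * complex_of_real (exp q))" by (simp add: ac_simps)
  also have "\<dots> = iexp (u + v) * complex_of_real (exp (p + q))"
    by (simp only: iexp_mult_iexp exp_add of_real_mult)
  finally show ?thesis .
qed

lemma rearr:
  fixes A B C E K D :: complex
  assumes "B * C = K * D"
  shows "(A * B) * (C * E) = (K * E) * (A * D)"
proof -
  have "(A * B) * (C * E) = A * E * (B * C)" by (simp add: ac_simps)
  also have "\<dots> = A * E * (K * D)" using assms by simp
  also have "\<dots> = (K * E) * (A * D)" by (simp add: ac_simps)
  finally show ?thesis .
qed

lemma bvn_char:
  assumes a: "a > 0" and D: "a * b - c^2 > 0"
  shows "integrable lborel (\<lambda>z. complex_of_real (bvn m1 m2 a b c z) * iexp (s * fst z + r * snd z))"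
    and "(\<integral>z. complex_of_real (bvn m1 m2 a b c z) * iexp (s * fst z + r * snd z) \<partial>lborel) =
         iexp (s * m1 + r * m2) * complex_of_real (exp (- (a * s^2 + 2 * c * s * r + b * r^2) / 2))"
proof -
  have PS: "pair_sigma_finite (lborel::real measure) (lborel::real measure)"
    by (simp add: pair_sigma_finite_def lborel.sigma_finite_measure_axioms)
  define DD where "DD = a * b - c^2"
  have Dp: "DD > 0" using D by (simp add: DD_def)
  define \<tau> where "\<tau> = sqrt (DD / a)"
  have tp: "\<tau> > 0" using a Dp by (simp add: \<tau>_def)
  have sp: "sqrt a > 0" using a by simp
  define \<mu> where "\<mu> x = m2 + c * (x - m1) / a" for x
  let ?F = "\<lambda>z. complex_of_real (bvn m1 m2 a b c z) * iexp (s * fst z + r * snd z)"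
  have Feq: "?F (x, y) = (complex_of_real (normal_density m1 (sqrt a) x) * iexp (s * x)) *
                         (complex_of_real (normal_density (\<mu> x) \<tau> y) * iexp (r * y))" for x y
  proof -
    have ie: "iexp (s * x + r * y) = iexp (s * x) * iexp (r * y)" by (simp only: iexp_mult_iexp)
    show ?thesis unfolding fst_conv snd_conv bvn_factor[OF a D] ie \<tau>_def \<mu>_def DD_def
      by (simp only: of_real_mult mult_ac)
  qed
  have Fm: "?F \<in> borel_measurable (lborel \<Otimes>\<^sub>M lborel)"
    unfolding lborel_prod measurable_lborel2 bvn_def
    by (intro borel_measurable_continuous_onI continuous_intros) (use Dp in \<open>auto simp: DD_def\<close>)
  have inner: "(\<integral>y. ?F (x, y) \<partial>lborel) = (complex_of_real (normal_density m1 (sqrt a) x) * iexp (s * x)) *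
       (iexp (r * \<mu> x) * complex_of_real (exp (- (r^2 * \<tau>^2) / 2)))" for x
    by (simp only: Feq integral_mult_right_zero normal_char[OF tp])
  have innerint: "integrable lborel (\<lambda>y. ?F (x, y))" for x
    by (simp only: Feq) (intro integrable_mult_right normal_iexp_integrable tp)
  have nF: "norm (?F (x, y)) = normal_density m1 (sqrt a) x * normal_density (\<mu> x) \<tau> y" for x y
    by (simp only: Feq) (simp add: norm_mult normal_density_nonneg)
  have innernorm: "(\<integral>y. norm (?F (x, y)) \<partial>lborel) = normal_density m1 (sqrt a) x" for x
    by (simp only: nF integral_mult_right_zero) (simp add: integral_normal_density tp)
  have intP: "integrable (lborel \<Otimes>\<^sub>M lborel) ?F"
  proof (rule pair_sigma_finite.Fubini_integrable[OF PS Fm])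
    show "integrable lborel (\<lambda>x. \<integral>y. norm (?F (x, y)) \<partial>lborel)"
      by (simp only: innernorm) (rule integrable_normal_density[OF sp])
    show "AE x in lborel. integrable lborel (\<lambda>y. ?F (x, y))"
      using innerint by simp
  qed
  then show "integrable lborel ?F" by (simp add: lborel_prod)
  have "(\<integral>z. ?F z \<partial>lborel) = (\<integral>x. (\<integral>y. ?F (x, y) \<partial>lborel) \<partial>lborel)"
    using pair_sigma_finite.integral_fst'[OF PS intP] by (simp add: lborel_prod)
  also have "\<dots> = (\<integral>x. (iexp (r * (m2 - c * m1 / a)) * complex_of_real (exp (- (r^2 * \<tau>^2) / 2))) *
        (complex_of_real (normal_density m1 (sqrt a) x) * iexp ((s + r * c / a) * x)) \<partial>lborel)"
  proof (rule Bochner_Integration.integral_cong[OF refl])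
    fix x
    have "iexp (s * x) * iexp (r * \<mu> x) = iexp (r * (m2 - c * m1 / a)) * iexp ((s + r * c / a) * x)"
    proof -
      have "s * x + r * \<mu> x = r * (m2 - c * m1 / a) + (s + r * c / a) * x"
        using a by (simp add: \<mu>_def field_simps)
      then show ?thesis by (simp only: iexp_mult_iexp)
    qed
    then show "(\<integral>y. ?F (x, y) \<partial>lborel) = (iexp (r * (m2 - c * m1 / a)) * complex_of_real (exp (- (r^2 * \<tau>^2) / 2))) *
        (complex_of_real (normal_density m1 (sqrt a) x) * iexp ((s + r * c / a) * x))"
      unfolding inner by (rule rearr)
  qed
  also have "\<dots> = (iexp (r * (m2 - c * m1 / a)) * complex_of_real (exp (- (r^2 * \<tau>^2) / 2))) *
        (iexp ((s + r * c / a) * m1) * complex_of_real (exp (- ((s + r * c / a)^2 * (sqrt a)^2) / 2)))"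
    by (simp only: integral_mult_right_zero normal_char[OF sp])
  also have "\<dots> = iexp (r * (m2 - c * m1 / a) + (s + r * c / a) * m1) *
        complex_of_real (exp (- (r^2 * \<tau>^2) / 2 + - ((s + r * c / a)^2 * (sqrt a)^2) / 2))"
    by (rule comb)
  also have "r * (m2 - c * m1 / a) + (s + r * c / a) * m1 = s * m1 + r * m2"
    using a by (simp add: field_simps)
  also have "- (r^2 * \<tau>^2) / 2 + - ((s + r * c / a)^2 * (sqrt a)^2) / 2 = - (a * s^2 + 2 * c * s * r + b * r^2) / 2"
  proof -
    have t2: "\<tau>^2 = DD / a" using a Dp by (simp add: \<tau>_def)
    have s2: "(sqrt a)^2 = a" using a by simp
    show ?thesis unfolding t2 s2 DD_def using a by (simp add: field_simps power2_eq_square)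
  qed
  finally show "(\<integral>z. ?F z \<partial>lborel) = iexp (s * m1 + r * m2) * complex_of_real (exp (- (a * s^2 + 2 * c * s * r + b * r^2) / 2))" .
qed

lemma gauss_prod:
  fixes m :: "real^('d::finite+'d)" and a b c :: "real^'d"
  assumes a: "\<And>i. a $ i > 0" and D: "\<And>i. a $ i * b $ i - (c $ i)^2 > 0"
  shows "gauss_density m (CB a b c) w =
     (\<Prod>i\<in>UNIV. bvn (m $ Inl i) (m $ Inr i) (a $ i) (b $ i) (c $ i) (w $ Inl i, w $ Inr i))"
proof -
  have D': "(c $ i)^2 < a $ i * b $ i" for i using D[of i] by simp
  have dle: "(c $ i)^2 \<le> a $ i * b $ i" for i using D'[of i] by simp
  define q where "q i = (b $ i / (a $ i * b $ i - (c $ i)^2)) * (w $ Inl i - m $ Inl i)^2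
      + 2 * (- c $ i / (a $ i * b $ i - (c $ i)^2)) * (w $ Inl i - m $ Inl i) * (w $ Inr i - m $ Inr i)
      + (a $ i / (a $ i * b $ i - (c $ i)^2)) * (w $ Inr i - m $ Inr i)^2" for i
  have quad: "(w - m) \<bullet> (matrix_inv (CB a b c) *v (w - m)) = (\<Sum>i\<in>UNIV. q i)"
  proof -
    have "(w - m) \<bullet> (matrix_inv (CB a b c) *v (w - m)) =
       stack (top_part (w - m)) (bot_part (w - m)) \<bullet> (matrix_inv (CB a b c) *v stack (top_part (w - m)) (bot_part (w - m)))"
      by (simp only: stack_top_bot)
    also have "\<dots> = (\<Sum>i\<in>UNIV. q i)"
      unfolding matrix_inv_CB[OF D'] quad_CB q_def Dl_def by simp
    finally show ?thesis .
  qed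
  have det: "det (CB a b c) = (\<Prod>i\<in>UNIV. a $ i * b $ i - (c $ i)^2)"
    by (rule det_CB[OF a dle])
  have sq: "sqrt ((2 * pi) ^ CARD('d + 'd) * det (CB a b c)) = (\<Prod>i\<in>UNIV. 2 * pi * sqrt (a $ i * b $ i - (c $ i)^2))"
  proof -
    have "(2 * pi) ^ CARD('d + 'd) * det (CB a b c) = (\<Prod>k\<in>(UNIV::('d+'d) set). 2 * pi) * (\<Prod>i\<in>UNIV. a $ i * b $ i - (c $ i)^2)"
      by (simp add: det prod_constant)
    also have "\<dots> = (\<Prod>i\<in>UNIV. 2 * pi * sqrt (a $ i * b $ i - (c $ i)^2))^2"
    proof -
      have "(\<Prod>i\<in>UNIV. 2 * pi * sqrt (a $ i * b $ i - (c $ i)^2))^2 = (\<Prod>i\<in>UNIV. (2 * pi * sqrt (a $ i * b $ i - (c $ i)^2))^2)"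
        by (simp add: prod_power_distrib)
      also have "\<dots> = (\<Prod>i\<in>UNIV. (2 * pi) * (2 * pi) * (a $ i * b $ i - (c $ i)^2))"
        using D by (intro prod.cong refl) (simp add: power_mult_distrib less_imp_le power2_eq_square)
      finally show ?thesis by (simp only: prod_UNIV_Plus prod.distrib ac_simps)
    qed
    finally show ?thesis
      using D by (simp add: prod_nonneg less_imp_le)
  qed
  have "gauss_density m (CB a b c) w = exp (\<Sum>i\<in>UNIV. - (1/2) * q i) / (\<Prod>i\<in>UNIV. 2 * pi * sqrt (a $ i * b $ i - (c $ i)^2))"
    unfolding gauss_density_def quad sq by (simp add: sum_distrib_left)
  also have "\<dots> = (\<Prod>i\<in>UNIV. exp (- (1/2) * q i) / (2 * pi * sqrt (a $ i * b $ i - (c $ i)^2)))"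
    by (simp add: exp_sum prod_dividef)
  also have "\<dots> = (\<Prod>i\<in>UNIV. bvn (m $ Inl i) (m $ Inr i) (a $ i) (b $ i) (c $ i) (w $ Inl i, w $ Inr i))"
    by (simp add: bvn_def q_def)
  finally show ?thesis .
qed

lemma iexp_sum: "finite A \<Longrightarrow> iexp (\<Sum>i\<in>A. f i) = (\<Prod>i\<in>A. iexp (f i))"
  by (simp add: of_real_sum sum_distrib_left exp_sum)

lemma inner_pairs: "(t::real^('d::finite+'d)) \<bullet> w = (\<Sum>i\<in>UNIV. t $ Inl i * w $ Inl i + t $ Inr i * w $ Inr i)"
  by (simp add: inner_vec_def sum_UNIV_Plus sum.distrib)

lemma gauss_char:
  fixes m t :: "real^('d::finite+'d)" and a b c :: "real^'d"
  assumes a: "\<And>i. a $ i > 0" and D: "\<And>i. a $ i * b $ i - (c $ i)^2 > 0"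
  shows "integrable lborel (\<lambda>w. complex_of_real (gauss_density m (CB a b c) w) * iexp (t \<bullet> w))"
    and "(\<integral>w. complex_of_real (gauss_density m (CB a b c) w) * iexp (t \<bullet> w) \<partial>lborel) =
         iexp (t \<bullet> m) * complex_of_real (exp (- (1/2) * (t \<bullet> (CB a b c *v t))))"
proof -
  define H where "H i z = complex_of_real (bvn (m $ Inl i) (m $ Inr i) (a $ i) (b $ i) (c $ i) z) *
      iexp (t $ Inl i * fst z + t $ Inr i * snd z)" for i z
  have eq: "complex_of_real (gauss_density m (CB a b c) w) * iexp (t \<bullet> w) = (\<Prod>i\<in>UNIV. H i (w $ Inl i, w $ Inr i))" for w
    unfolding gauss_prod[OF a D] inner_pairs H_def
    by (simp only: of_real_prod iexp_sum[OF finite] prod.distrib fst_conv snd_conv)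
  have Hint: "integrable lborel (H i)" for i
    unfolding H_def by (rule bvn_char(1)[OF a D])
  show "integrable lborel (\<lambda>w. complex_of_real (gauss_density m (CB a b c) w) * iexp (t \<bullet> w))"
    by (simp only: eq) (rule integral_prod_pairs(1)[OF Hint])
  have "(\<integral>w. complex_of_real (gauss_density m (CB a b c) w) * iexp (t \<bullet> w) \<partial>lborel) =
       (\<Prod>i\<in>UNIV. \<integral>z. H i z \<partial>lborel)"
    by (simp only: eq) (rule integral_prod_pairs(2)[OF Hint])
  also have "\<dots> = (\<Prod>i\<in>UNIV. iexp (t $ Inl i * m $ Inl i + t $ Inr i * m $ Inr i) *
       complex_of_real (exp (- (a $ i * (t $ Inl i)^2 + 2 * c $ i * t $ Inl i * t $ Inr i + b $ i * (t $ Inr i)^2) / 2)))"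
    unfolding H_def bvn_char(2)[OF a D] by simp
  also have "\<dots> = iexp (\<Sum>i\<in>UNIV. t $ Inl i * m $ Inl i + t $ Inr i * m $ Inr i) *
       complex_of_real (exp (\<Sum>i\<in>UNIV. - (a $ i * (t $ Inl i)^2 + 2 * c $ i * t $ Inl i * t $ Inr i + b $ i * (t $ Inr i)^2) / 2))"
    by (simp only: iexp_sum[OF finite] prod.distrib exp_sum[OF finite] of_real_prod)
  also have "\<dots> = iexp (t \<bullet> m) * complex_of_real (exp (- (1/2) * (t \<bullet> (CB a b c *v t))))"
  proof -
    have "t \<bullet> (CB a b c *v t) = stack (top_part t) (bot_part t) \<bullet> (CB a b c *v stack (top_part t) (bot_part t))"
      by (simp only: stack_top_bot)
    also have "\<dots> = (\<Sum>i\<in>UNIV. a $ i * (t $ Inl i)^2 + 2 * c $ i * t $ Inl i * t $ Inr i + b $ i * (t $ Inr i)^2)"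
      by (simp only: quad_CB top_part_nth bot_part_nth)
    finally have Q: "t \<bullet> (CB a b c *v t) = (\<Sum>i\<in>UNIV. a $ i * (t $ Inl i)^2 + 2 * c $ i * t $ Inl i * t $ Inr i + b $ i * (t $ Inr i)^2)" .
    have S: "(\<Sum>i\<in>UNIV. - (a $ i * (t $ Inl i)^2 + 2 * c $ i * t $ Inl i * t $ Inr i + b $ i * (t $ Inr i)^2) / 2)
       = - (1/2) * (\<Sum>i\<in>UNIV. a $ i * (t $ Inl i)^2 + 2 * c $ i * t $ Inl i * t $ Inr i + b $ i * (t $ Inr i)^2)"
      unfolding sum_distrib_left by (rule sum.cong) (auto simp: field_simps)
    show ?thesis unfolding Q S inner_pairs[of t m] ..
  qed
  finally show "(\<integral>w. complex_of_real (gauss_density m (CB a b c) w) * iexp (t \<bullet> w) \<partial>lborel) =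
         iexp (t \<bullet> m) * complex_of_real (exp (- (1/2) * (t \<bullet> (CB a b c *v t))))" .
qed

lemma Re_iexp: "Re (complex_of_real x * iexp \<theta>) = x * cos \<theta>"
  by (simp add: Re_exp)

lemma gauss_cos:
  fixes m T :: "real^('d::finite+'d)" and a b c :: "real^'d"
  assumes a: "\<And>i. a $ i > 0" and D: "\<And>i. a $ i * b $ i - (c $ i)^2 > 0"
  shows "integrable lborel (\<lambda>w. gauss_density m (CB a b c) w * cos (T \<bullet> w))"
    and "(\<integral>w. gauss_density m (CB a b c) w * cos (T \<bullet> w) \<partial>lborel) = exp (- (1/2) * (T \<bullet> (CB a b c *v T))) * cos (T \<bullet> m)"
proof -
  have "integrable lborel (\<lambda>w. Re (complex_of_real (gauss_density m (CB a b c) w) * iexp (T \<bullet> w)))"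
    by (rule integrable_Re[OF gauss_char(1)[OF a D]])
  then show "integrable lborel (\<lambda>w. gauss_density m (CB a b c) w * cos (T \<bullet> w))"
    by (simp only: Re_iexp)
  have "(\<integral>w. gauss_density m (CB a b c) w * cos (T \<bullet> w) \<partial>lborel) =
      (\<integral>w. Re (complex_of_real (gauss_density m (CB a b c) w) * iexp (T \<bullet> w)) \<partial>lborel)"
    by (simp only: Re_iexp)
  also have "\<dots> = Re (\<integral>w. complex_of_real (gauss_density m (CB a b c) w) * iexp (T \<bullet> w) \<partial>lborel)"
    by (rule integral_Re[OF gauss_char(1)[OF a D]])
  also have "\<dots> = exp (- (1/2) * (T \<bullet> (CB a b c *v T))) * cos (T \<bullet> m)"
    unfolding gauss_char(2)[OF a D] by (simp add: Re_exp mult.commute)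
  finally show "(\<integral>w. gauss_density m (CB a b c) w * cos (T \<bullet> w) \<partial>lborel) = exp (- (1/2) * (T \<bullet> (CB a b c *v T))) * cos (T \<bullet> m)" .
qed

lemma gauss_neg: "gauss_density m C (- w) = gauss_density (- m) C w"
proof -
  have e: "- w - m = - (w + m)" by simp
  have h: "matrix_inv C *v (- (w + m)) = - (matrix_inv C *v (w + m))"
    by (rule linear_neg[OF matrix_vector_mul_linear])
  have q: "(- w - m) \<bullet> (matrix_inv C *v (- w - m)) = (w - - m) \<bullet> (matrix_inv C *v (w - - m))"
    unfolding e h by (simp only: inner_minus_left inner_minus_right minus_minus diff_minus_eq_add)
  show ?thesis unfolding gauss_density_def q ..
qed

lemma sym_gauss_cos:
  fixes m T :: "real^('d::finite+'d)" and a b c :: "real^'d"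
  assumes a: "\<And>i. a $ i > 0" and D: "\<And>i. a $ i * b $ i - (c $ i)^2 > 0"
  shows "integrable lborel (\<lambda>w. (1/2 * gauss_density m (CB a b c) w + 1/2 * gauss_density m (CB a b c) (- w)) * cos (T \<bullet> w))"
    and "(\<integral>w. (1/2 * gauss_density m (CB a b c) w + 1/2 * gauss_density m (CB a b c) (- w)) * cos (T \<bullet> w) \<partial>lborel) =
          exp (- (1/2) * (T \<bullet> (CB a b c *v T))) * cos (T \<bullet> m)"
proof -
  have eq: "(1/2 * gauss_density m (CB a b c) w + 1/2 * gauss_density m (CB a b c) (- w)) * cos (T \<bullet> w) =
     1/2 * (gauss_density m (CB a b c) w * cos (T \<bullet> w)) + 1/2 * (gauss_density (- m) (CB a b c) w * cos (T \<bullet> w))" for w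
    by (simp add: gauss_neg algebra_simps)
  note i1 = gauss_cos(1)[OF a D, where m=m and T=T] and i2 = gauss_cos(1)[OF a D, where m="- m" and T=T]
  show "integrable lborel (\<lambda>w. (1/2 * gauss_density m (CB a b c) w + 1/2 * gauss_density m (CB a b c) (- w)) * cos (T \<bullet> w))"
    unfolding eq using i1 i2 by simp
  show "(\<integral>w. (1/2 * gauss_density m (CB a b c) w + 1/2 * gauss_density m (CB a b c) (- w)) * cos (T \<bullet> w) \<partial>lborel) =
          exp (- (1/2) * (T \<bullet> (CB a b c *v T))) * cos (T \<bullet> m)"
    unfolding eq using i1 i2 by (simp add: gauss_cos(2)[OF a D])
qed

definition cc :: "(nat \<Rightarrow> real^'d) \<Rightarrow> (nat \<Rightarrow> real^'d) \<Rightarrow> (nat \<Rightarrow> real) \<Rightarrow> nat \<Rightarrow> real^'d" where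
  "cc s1 s2 rho q = (\<chi> i. rho q * (sqrt (s1 q $ i) * sqrt (s2 q $ i)))"

lemma Sigc_eq: "Sigc rho s1 s2 q = diagm (cc s1 s2 rho q)"
  unfolding Sigc_def diagm_mult scaleR_diagm cc_def by (simp add: vec_eq_iff)

lemma Cmat_eq: "block (Sig1 s1 q) (transpose (Sigc rho s1 s2 q)) (Sigc rho s1 s2 q) (Sig2 s2 q) =
   CB (s1 q) (s2 q) (cc s1 s2 rho q)"
  unfolding Sig1_def Sig2_def Sigc_eq diagm_transpose CB_def ..

lemma stack_neg: "stack (- top_part w) (- bot_part w) = - w"
  by (simp add: vec_eq_iff stack_def split: sum.split)

lemma sq_eq: "sq mu1 mu2 s1 s2 rho q (top_part w) (bot_part w) =
   1/2 * gauss_density (stack (mu1 q) (mu2 q)) (CB (s1 q) (s2 q) (cc s1 s2 rho q)) w +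
   1/2 * gauss_density (stack (mu1 q) (mu2 q)) (CB (s1 q) (s2 q) (cc s1 s2 rho q)) (- w)"
  unfolding sq_def Nq_def Cmat_eq stack_top_bot stack_neg ..

lemma Delta_eq0:
  fixes a b r :: real
  assumes "a > 0" "b > 0"
  shows "a * b - (r * (sqrt a * sqrt b))^2 = a * b * (1 - r^2)"
  using assms by (simp add: power_mult_distrib algebra_simps)

lemma Delta_eq:
  assumes "s1 q $ i > 0" "s2 q $ i > 0"
  shows "s1 q $ i * s2 q $ i - (cc s1 s2 rho q $ i)^2 = s1 q $ i * s2 q $ i * (1 - (rho q)^2)"
  unfolding cc_def vec_lambda_beta by (rule Delta_eq0[OF assms])

lemma sq_bad:
  assumes s1: "\<And>i. s1 q $ i > 0" and s2: "\<And>i. s2 q $ i > 0" and r: "(rho q)^2 = 1"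
  shows "sq mu1 mu2 s1 s2 rho q (top_part w) (bot_part w) = 0"
proof -
  have "det (CB (s1 q) (s2 q) (cc s1 s2 rho q)) = 0"
  proof -
    have le: "(cc s1 s2 rho q $ i)^2 \<le> s1 q $ i * s2 q $ i" for i
      using Delta_eq0[OF s1[of i] s2[of i], of "rho q"] r by (simp add: cc_def)
    have "det (CB (s1 q) (s2 q) (cc s1 s2 rho q)) = (\<Prod>i\<in>UNIV. s1 q $ i * s2 q $ i - (cc s1 s2 rho q $ i)^2)"
      by (rule det_CB[OF s1 le])
    also have "\<dots> = 0"
    proof (rule prod_zero)
      show "\<exists>i\<in>UNIV. s1 q $ i * s2 q $ i - (cc s1 s2 rho q $ i)^2 = 0"
        using Delta_eq0[OF s1[of undefined] s2[of undefined], of "rho q"] r by (auto simp: cc_def)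
    qed simp
    finally show ?thesis .
  qed
  then show ?thesis unfolding sq_eq gauss_density_def by simp
qed

definition hh :: "real^'d \<Rightarrow> real^'d \<Rightarrow> real^('d+'d) \<Rightarrow> real" where
  "hh x1 x2 w = cos (top_part w \<bullet> x1 - top_part w \<bullet> x2) + cos (bot_part w \<bullet> x1 - bot_part w \<bullet> x2)
      + cos (top_part w \<bullet> x1 - bot_part w \<bullet> x2) + cos (bot_part w \<bullet> x1 - top_part w \<bullet> x2)"

lemma hh_eq: "hh x1 x2 w = cos (stack (x1 - x2) 0 \<bullet> w) + cos (stack 0 (x1 - x2) \<bullet> w)
      + cos (stack x1 (- x2) \<bullet> w) + cos (stack (- x2) x1 \<bullet> w)"
proof -
  have w: "w = stack (top_part w) (bot_part w)" by (simp only: stack_top_bot)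
  show ?thesis
    unfolding hh_def by (subst (5 6 7 8) w) (simp add: inner_stack inner_commute inner_diff_right)
qed

definition kbr where
  "kbr mu1 mu2 s1 s2 rho q x1 x2 =
       (let S1 = Sig1 s1 q; S2 = Sig2 s2 q; Sc = Sigc rho s1 s2 q in
          exp (- (1/2) * (x1 \<bullet> (S1 *v x1) - 2 * (x1 \<bullet> (Sc *v x2)) + x2 \<bullet> (S2 *v x2)))
            * cos (mu1 q \<bullet> x1 - mu2 q \<bullet> x2)
        + exp (- (1/2) * (x2 \<bullet> (S1 *v x2) - 2 * (x1 \<bullet> (Sc *v x2)) + x1 \<bullet> (S2 *v x1)))
            * cos (mu1 q \<bullet> x2 - mu2 q \<bullet> x1)
        + exp (- (1/2) * ((x1 - x2) \<bullet> (S1 *v (x1 - x2)))) * cos (mu1 q \<bullet> (x1 - x2))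
        + exp (- (1/2) * ((x1 - x2) \<bullet> (S2 *v (x1 - x2)))) * cos (mu2 q \<bullet> (x1 - x2)))"

lemma k_ngsm_kbr: "k_ngsm Q alpha mu1 mu2 s1 s2 rho x1 x2 = (1/4) * (\<Sum>q = 1..Q. alpha q * kbr mu1 mu2 s1 s2 rho q x1 x2)"
  unfolding k_ngsm_def kbr_def ..

lemma diag_quad: "x \<bullet> (diagm a *v y) = (\<Sum>i\<in>UNIV. a $ i * x $ i * y $ i)"
  by (simp add: diagm_mulv inner_vec_def algebra_simps)

lemma quad_T_eq:
  "stack u v \<bullet> (CB a b c *v stack u v) = (\<Sum>i\<in>UNIV. a $ i * (u $ i)^2 + 2 * c $ i * u $ i * v $ i + b $ i * (v $ i)^2)"
  by (rule quad_CB)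

lemma kbr_match:
  fixes x1 x2 :: "real^'d::finite" and mu1 mu2 s1 s2 :: "nat \<Rightarrow> real^'d" and rho :: "nat \<Rightarrow> real" and q :: nat
  defines "E \<equiv> \<lambda>T. exp (- (1/2) * (T \<bullet> (CB (s1 q) (s2 q) (cc s1 s2 rho q) *v T))) * cos (T \<bullet> stack (mu1 q) (mu2 q))"
  shows "kbr mu1 mu2 s1 s2 rho q x1 x2 = E (stack x1 (- x2)) + E (stack (- x2) x1) + E (stack (x1 - x2) 0) + E (stack 0 (x1 - x2))"
proof -
  let ?a = "s1 q" and ?b = "s2 q" and ?c = "cc s1 s2 rho q"
  have q1: "stack x1 (- x2) \<bullet> (CB ?a ?b ?c *v stack x1 (- x2)) = x1 \<bullet> (diagm ?a *v x1) - 2 * (x1 \<bullet> (diagm ?c *v x2)) + x2 \<bullet> (diagm ?b *v x2)"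
    apply (simp only: quad_CB diag_quad sum_distrib_left sum_subtractf[symmetric] sum.distrib[symmetric])
    apply (rule sum.cong[OF refl])
    apply (simp add: algebra_simps power2_eq_square)
    done
  have q2: "stack (- x2) x1 \<bullet> (CB ?a ?b ?c *v stack (- x2) x1) = x2 \<bullet> (diagm ?a *v x2) - 2 * (x1 \<bullet> (diagm ?c *v x2)) + x1 \<bullet> (diagm ?b *v x1)"
    apply (simp only: quad_CB diag_quad sum_distrib_left sum_subtractf[symmetric] sum.distrib[symmetric])
    apply (rule sum.cong[OF refl])
    apply (simp add: algebra_simps power2_eq_square)
    done
  have q3: "stack (x1 - x2) 0 \<bullet> (CB ?a ?b ?c *v stack (x1 - x2) 0) = (x1 - x2) \<bullet> (diagm ?a *v (x1 - x2))"
    apply (simp only: quad_CB diag_quad)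
    apply (rule sum.cong[OF refl])
    apply (simp add: algebra_simps power2_eq_square)
    done
  have q4: "stack 0 (x1 - x2) \<bullet> (CB ?a ?b ?c *v stack 0 (x1 - x2)) = (x1 - x2) \<bullet> (diagm ?b *v (x1 - x2))"
    apply (simp only: quad_CB diag_quad)
    apply (rule sum.cong[OF refl])
    apply (simp add: algebra_simps power2_eq_square)
    done
  have m1: "stack x1 (- x2) \<bullet> stack (mu1 q) (mu2 q) = mu1 q \<bullet> x1 - mu2 q \<bullet> x2"
    by (simp add: inner_stack inner_commute)
  have m2: "cos (stack (- x2) x1 \<bullet> stack (mu1 q) (mu2 q)) = cos (mu1 q \<bullet> x2 - mu2 q \<bullet> x1)"
  proof -
    have "stack (- x2) x1 \<bullet> stack (mu1 q) (mu2 q) = - (mu1 q \<bullet> x2 - mu2 q \<bullet> x1)"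
      by (simp add: inner_stack inner_commute)
    then show ?thesis by (simp only: cos_minus)
  qed
  have m3: "stack (x1 - x2) 0 \<bullet> stack (mu1 q) (mu2 q) = mu1 q \<bullet> (x1 - x2)"
    by (simp add: inner_stack inner_commute)
  have m4: "stack 0 (x1 - x2) \<bullet> stack (mu1 q) (mu2 q) = mu2 q \<bullet> (x1 - x2)"
    by (simp add: inner_stack inner_commute)
  show ?thesis
    unfolding kbr_def Let_def Sig1_def Sig2_def Sigc_eq E_def q1 q2 q3 q4 m1 m2 m3 m4 ..
qed

lemma integral_add4:
  fixes f1 f2 f3 f4 :: "'a \<Rightarrow> real"
  assumes "integrable M f1" "integrable M f2" "integrable M f3" "integrable M f4"
  shows "(\<integral>w. f1 w + f2 w + f3 w + f4 w \<partial>M) = integral\<^sup>L M f1 + integral\<^sup>L M f2 + integral\<^sup>L M f3 + integral\<^sup>L M f4"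
  using assms by (simp add: Bochner_Integration.integral_add Bochner_Integration.integrable_add)

lemma q_good:
  fixes x1 x2 :: "real^'d::finite" and mu1 mu2 s1 s2 :: "nat \<Rightarrow> real^'d" and rho :: "nat \<Rightarrow> real" and q :: nat
  assumes s1: "\<And>i. s1 q $ i > 0" and s2: "\<And>i. s2 q $ i > 0" and r: "(rho q)^2 < 1"
  shows "integrable lborel (\<lambda>w. sq mu1 mu2 s1 s2 rho q (top_part w) (bot_part w))"
    and "(\<integral>w. sq mu1 mu2 s1 s2 rho q (top_part w) (bot_part w) \<partial>lborel) = 1"
    and "integrable lborel (\<lambda>w. sq mu1 mu2 s1 s2 rho q (top_part w) (bot_part w) * hh x1 x2 w)"
    and "(\<integral>w. sq mu1 mu2 s1 s2 rho q (top_part w) (bot_part w) * hh x1 x2 w \<partial>lborel) = kbr mu1 mu2 s1 s2 rho q x1 x2"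
proof -
  let ?a = "s1 q" and ?b = "s2 q" and ?c = "cc s1 s2 rho q" and ?m = "stack (mu1 q) (mu2 q)"
  have D: "?a $ i * ?b $ i - (?c $ i)^2 > 0" for i
  proof -
    have "?a $ i * ?b $ i - (?c $ i)^2 = ?a $ i * ?b $ i * (1 - (rho q)^2)"
      using Delta_eq0[OF s1[of i] s2[of i], of "rho q"] by (simp add: cc_def)
    moreover have "?a $ i * ?b $ i * (1 - (rho q)^2) > 0" using s1[of i] s2[of i] r by simp
    ultimately show ?thesis by simp
  qed
  let ?G = "\<lambda>w. 1/2 * gauss_density ?m (CB ?a ?b ?c) w + 1/2 * gauss_density ?m (CB ?a ?b ?c) (- w)"
  have sqe: "sq mu1 mu2 s1 s2 rho q (top_part w) (bot_part w) = ?G w" for w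
    by (rule sq_eq)
  note I = sym_gauss_cos(1)[OF s1 D, where m="?m"] and J = sym_gauss_cos(2)[OF s1 D, where m="?m"]
  have I0: "integrable lborel ?G" using I[where T=0] by simp
  show "integrable lborel (\<lambda>w. sq mu1 mu2 s1 s2 rho q (top_part w) (bot_part w))"
    unfolding sqe by (rule I0)
  show "(\<integral>w. sq mu1 mu2 s1 s2 rho q (top_part w) (bot_part w) \<partial>lborel) = 1"
    unfolding sqe using J[where T=0] by simp
  have hsplit: "?G w * hh x1 x2 w = ?G w * cos (stack x1 (- x2) \<bullet> w) + ?G w * cos (stack (- x2) x1 \<bullet> w)
      + ?G w * cos (stack (x1 - x2) 0 \<bullet> w) + ?G w * cos (stack 0 (x1 - x2) \<bullet> w)" for w
    unfolding hh_eq distrib_left by (simp only: add_ac)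
  show "integrable lborel (\<lambda>w. sq mu1 mu2 s1 s2 rho q (top_part w) (bot_part w) * hh x1 x2 w)"
    unfolding sqe hsplit by (intro Bochner_Integration.integrable_add I)
  show "(\<integral>w. sq mu1 mu2 s1 s2 rho q (top_part w) (bot_part w) * hh x1 x2 w \<partial>lborel) = kbr mu1 mu2 s1 s2 rho q x1 x2"
    unfolding sqe hsplit kbr_match
    by (simp only: integral_add4[OF I I I I] J)
qed

lemma trig4: "(cos (a1::real) + cos b1) * (cos a2 + cos b2) + (sin a1 + sin b1) * (sin a2 + sin b2) =
   cos (a1 - a2) + cos (b1 - b2) + cos (a1 - b2) + cos (b1 - a2)"
  by (simp only: cos_diff distrib_left distrib_right add_ac mult_ac)

lemma phi_sum:
  fixes W :: "nat \<Rightarrow> real^('d::finite+'d)" and x1 x2 :: "real^'d"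
  assumes ev: "even L" and Lp: "L > 0"
  shows "(\<Sum>k<L. phi L W x1 k * phi L W x2 k) = 1 / (2 * real L) * (\<Sum>l\<in>{1..L div 2}. hh x1 x2 (W l))"
proof -
  obtain n where n: "L = n + n" using ev by (metis evenE mult_2)
  have Ld: "L div 2 = n" using n by simp
  define c where "c = sqrt (1 / (2 * real L))"
  have cc2: "c * c = 1 / (2 * real L)" unfolding c_def by simp
  have p1: "phi L W x k = c * (cos (top_part (W (k + 1)) \<bullet> x) + cos (bot_part (W (k + 1)) \<bullet> x))" if "k < n" for k x
    using that unfolding phi_def c_def Ld by simp
  have p2: "phi L W x (k + n) = c * (sin (top_part (W (k + 1)) \<bullet> x) + sin (bot_part (W (k + 1)) \<bullet> x))" for k x
    unfolding phi_def c_def Ld by simp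
  have "(\<Sum>k<L. phi L W x1 k * phi L W x2 k) = (\<Sum>k\<in>{0..<n}. phi L W x1 k * phi L W x2 k) + (\<Sum>k\<in>{n..<n+n}. phi L W x1 k * phi L W x2 k)"
    unfolding n by (simp add: sum.atLeastLessThan_concat lessThan_atLeast0)
  also have "(\<Sum>k\<in>{n..<n+n}. phi L W x1 k * phi L W x2 k) = (\<Sum>k\<in>{0..<n}. phi L W x1 (k + n) * phi L W x2 (k + n))"
    using sum.shift_bounds_nat_ivl[of "\<lambda>k. phi L W x1 k * phi L W x2 k" 0 n n] by simp
  also have "(\<Sum>k\<in>{0..<n}. phi L W x1 k * phi L W x2 k) + (\<Sum>k\<in>{0..<n}. phi L W x1 (k + n) * phi L W x2 (k + n))
     = (\<Sum>k\<in>{0..<n}. 1 / (2 * real L) * hh x1 x2 (W (Suc k)))"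
    unfolding sum.distrib[symmetric]
  proof (rule sum.cong[OF refl])
    fix k assume k: "k \<in> {0..<n}"
    have "phi L W x1 k * phi L W x2 k + phi L W x1 (k + n) * phi L W x2 (k + n) =
       (c * c) * ((cos (top_part (W (k + 1)) \<bullet> x1) + cos (bot_part (W (k + 1)) \<bullet> x1)) * (cos (top_part (W (k + 1)) \<bullet> x2) + cos (bot_part (W (k + 1)) \<bullet> x2))
        + (sin (top_part (W (k + 1)) \<bullet> x1) + sin (bot_part (W (k + 1)) \<bullet> x1)) * (sin (top_part (W (k + 1)) \<bullet> x2) + sin (bot_part (W (k + 1)) \<bullet> x2)))"
      using k by (simp add: p1 p2 algebra_simps)
    also have "\<dots> = 1 / (2 * real L) * hh x1 x2 (W (Suc k))"
      unfolding cc2 trig4 hh_def by simp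
    finally show "phi L W x1 k * phi L W x2 k + phi L W x1 (k + n) * phi L W x2 (k + n) = 1 / (2 * real L) * hh x1 x2 (W (Suc k))" .
  qed
  also have "\<dots> = 1 / (2 * real L) * (\<Sum>l\<in>{1..L div 2}. hh x1 x2 (W l))"
    unfolding Ld sum_distrib_left[symmetric] using sum.atLeast1_atMost_eq[of "\<lambda>l. hh x1 x2 (W l)" n]
    by (simp add: lessThan_atLeast0)
  finally show ?thesis .
qed

theorem theorem2:
  fixes Q :: nat and alpha :: "nat \<Rightarrow> real"
    and mu1 mu2 s1 s2 :: "nat \<Rightarrow> real^'d" and rho :: "nat \<Rightarrow> real"
    and L :: nat and M :: "'a measure" and W :: "nat \<Rightarrow> 'a \<Rightarrow> real^('d+'d)"
    and x1 x2 :: "real^'d"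
  assumes "Q \<ge> 1"
    and "\<And>q. q \<in> {1..Q} \<Longrightarrow> alpha q \<ge> 0"
    and "(\<Sum>q = 1..Q. alpha q) = 1"
    and "\<And>q i. q \<in> {1..Q} \<Longrightarrow> s1 q $ i > 0"
    and "\<And>q i. q \<in> {1..Q} \<Longrightarrow> s2 q $ i > 0"
    and "\<And>q. q \<in> {1..Q} \<Longrightarrow> -1 \<le> rho q \<and> rho q \<le> 1"
    and "even L" and "L > 0"
    and "prob_space M"
    and "prob_space.indep_vars M (\<lambda>_. borel) W {1..L div 2}"
    and "\<And>l. l \<in> {1..L div 2} \<Longrightarrow>
           distributed M lborel (W l)
             (\<lambda>w. ennreal (p_ngsm Q alpha mu1 mu2 s1 s2 rho (top_part w) (bot_part w)))"
  shows "prob_space.expectation M (\<lambda>\<omega>. \<Sum>k<L. phi L (\<lambda>l. W l \<omega>) x1 k * phi L (\<lambda>l. W l \<omega>) x2 k)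
           = k_ngsm Q alpha mu1 mu2 s1 s2 rho x1 x2"
proof -
  note s1pos = assms(4) and s2pos = assms(5) and rhob = assms(6) and ev = assms(7) and Lp = assms(8)
    and PS = assms(9) and dist = assms(11) and apos = assms(2) and asum = assms(3)
  interpret prob_space M by (rule PS)
  define P where "P w = p_ngsm Q alpha mu1 mu2 s1 s2 rho (top_part w) (bot_part w)" for w
  define sqq where "sqq q w = sq mu1 mu2 s1 s2 rho q (top_part w) (bot_part w)" for q w
  define good where "good q \<longleftrightarrow> (rho q)^2 < 1" for q
  define S where "S = (\<Sum>q = 1..Q. alpha q * kbr mu1 mu2 s1 s2 rho q x1 x2)"
  have Peq: "P w = (\<Sum>q = 1..Q. alpha q * sqq q w)" for w
    unfolding P_def sqq_def p_ngsm_def ..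
  have rho2: "(rho q)^2 \<le> 1" if "q \<in> {1..Q}" for q
  proof -
    have "\<bar>rho q\<bar> \<le> 1" using rhob[OF that] by auto
    then show ?thesis by (simp add: abs_square_le_1)
  qed
  have bad2: "(rho q)^2 = 1" if "q \<in> {1..Q}" "\<not> good q" for q
    using rho2[OF that(1)] that(2) unfolding good_def by simp
  have sqq_zero: "sqq q w = 0" if "q \<in> {1..Q}" "\<not> good q" for q w
    unfolding sqq_def by (rule sq_bad) (use s1pos[OF that(1)] s2pos[OF that(1)] bad2[OF that] in auto)
  have int_sq: "integrable lborel (sqq q)" if "q \<in> {1..Q}" for q
  proof (cases "good q")
    case True
    then show ?thesis unfolding sqq_def good_def
      by (intro q_good(1)) (use s1pos[OF that] s2pos[OF that] in auto)
  next
    case False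
    then have "sqq q = (\<lambda>_. 0)" using sqq_zero[OF that] by auto
    then show ?thesis by simp
  qed
  have int_sq1: "(\<integral>w. sqq q w \<partial>lborel) = (if good q then 1 else 0)" if "q \<in> {1..Q}" for q
  proof (cases "good q")
    case True
    have "(\<integral>w. sqq q w \<partial>lborel) = 1" unfolding sqq_def
      by (rule q_good(2)) (use s1pos[OF that] s2pos[OF that] True in \<open>auto simp: good_def\<close>)
    then show ?thesis using True by simp
  next
    case False
    then have "sqq q = (\<lambda>_. 0)" using sqq_zero[OF that] by auto
    then show ?thesis using False by simp
  qed
  have int_sqh: "integrable lborel (\<lambda>w. sqq q w * hh x1 x2 w)" if "q \<in> {1..Q}" for q
  proof (cases "good q")
    case True
    then show ?thesis unfolding sqq_def good_def
      by (intro q_good(3)) (use s1pos[OF that] s2pos[OF that] in auto)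
  next
    case False
    then have "(\<lambda>w. sqq q w * hh x1 x2 w) = (\<lambda>_. 0)" using sqq_zero[OF that] by auto
    then show ?thesis by simp
  qed
  have int_sqh1: "(\<integral>w. sqq q w * hh x1 x2 w \<partial>lborel) = (if good q then kbr mu1 mu2 s1 s2 rho q x1 x2 else 0)"
    if "q \<in> {1..Q}" for q
  proof (cases "good q")
    case True
    have "(\<integral>w. sqq q w * hh x1 x2 w \<partial>lborel) = kbr mu1 mu2 s1 s2 rho q x1 x2" unfolding sqq_def
      by (rule q_good(4)) (use s1pos[OF that] s2pos[OF that] True in \<open>auto simp: good_def\<close>)
    then show ?thesis using True by simp
  next
    case False
    then have "(\<lambda>w. sqq q w * hh x1 x2 w) = (\<lambda>_. 0)" using sqq_zero[OF that] by auto
    then show ?thesis using False by simp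
  qed
  have sqq_nonneg: "sqq q w \<ge> 0" if "q \<in> {1..Q}" for q w
  proof -
    have le: "(cc s1 s2 rho q $ i)^2 \<le> s1 q $ i * s2 q $ i" for i
    proof -
      have "s1 q $ i * s2 q $ i - (cc s1 s2 rho q $ i)^2 = s1 q $ i * s2 q $ i * (1 - (rho q)^2)"
        using Delta_eq0[OF s1pos[OF that, of i] s2pos[OF that, of i], of "rho q"] by (simp add: cc_def)
      moreover have "s1 q $ i * s2 q $ i * (1 - (rho q)^2) \<ge> 0"
        using s1pos[OF that, of i] s2pos[OF that, of i] rho2[OF that] by simp
      ultimately show ?thesis by simp
    qed
    have "det (CB (s1 q) (s2 q) (cc s1 s2 rho q)) \<ge> 0"
      unfolding det_CB[OF s1pos[OF that] le] using le by (simp add: prod_nonneg)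
    then have "gauss_density m (CB (s1 q) (s2 q) (cc s1 s2 rho q)) v \<ge> 0" for m v
      unfolding gauss_density_def by simp
    then show ?thesis unfolding sqq_def sq_eq by simp
  qed
  have P_nonneg: "P w \<ge> 0" for w
    unfolding Peq using apos sqq_nonneg by (intro sum_nonneg) simp
  have P_int: "integrable lborel P"
    unfolding Peq[abs_def] using int_sq by (intro Bochner_Integration.integrable_sum Bochner_Integration.integrable_mult_right) auto
  have P_integral: "(\<integral>w. P w \<partial>lborel) = (\<Sum>q = 1..Q. alpha q * (if good q then 1 else 0))"
    unfolding Peq using int_sq int_sq1 by (simp add: Bochner_Integration.integral_sum Bochner_Integration.integrable_mult_right)
  have dist1: "distributed M lborel (W 1) (\<lambda>w. ennreal (P w))"
  proof -
    have "1 \<in> {1..L div 2}" using ev Lp by (auto elim!: evenE)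
    then show ?thesis using dist unfolding P_def by blast
  qed
  have "(\<integral>w. P w * 1 \<partial>lborel) = (\<integral>\<omega>. 1 \<partial>M)"
    by (rule distributed_integral[OF dist1]) (auto simp: P_nonneg)
  then have P1: "(\<integral>w. P w \<partial>lborel) = 1" by (simp add: prob_space)
  have alpha_bad: "alpha q = 0" if "q \<in> {1..Q}" "\<not> good q" for q
  proof -
    have "(\<Sum>q = 1..Q. alpha q) = (\<Sum>q = 1..Q. alpha q * (if good q then 1 else 0)) + (\<Sum>q = 1..Q. (if good q then 0 else alpha q))"
      by (auto simp: sum.distrib[symmetric] intro!: sum.cong)
    then have "(\<Sum>q = 1..Q. (if good q then 0 else alpha q)) = 0"
      using asum P1 P_integral by simp
    then have "\<forall>q\<in>{1..Q}. (if good q then 0 else alpha q) = 0"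
      using apos by (subst sum_nonneg_eq_0_iff[symmetric]) auto
    then have "(if good q then 0 else alpha q) = 0" using that(1) by blast
    then show ?thesis using that(2) by simp
  qed
  have hh_meas: "hh x1 x2 \<in> borel_measurable lborel"
    unfolding hh_eq[abs_def] measurable_lborel2
    by (intro borel_measurable_continuous_onI continuous_intros)
  have Ph_int: "integrable lborel (\<lambda>w. P w * hh x1 x2 w)"
    unfolding Peq sum_distrib_right mult.assoc using int_sqh
    by (intro Bochner_Integration.integrable_sum Bochner_Integration.integrable_mult_right) auto
  have Ph_integral: "(\<integral>w. P w * hh x1 x2 w \<partial>lborel) = S"
  proof -
    have "(\<integral>w. P w * hh x1 x2 w \<partial>lborel) = (\<Sum>q = 1..Q. alpha q * (\<integral>w. sqq q w * hh x1 x2 w \<partial>lborel))"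
      unfolding Peq sum_distrib_right mult.assoc using int_sqh
      by (simp add: Bochner_Integration.integral_sum Bochner_Integration.integrable_mult_right)
    also have "\<dots> = S" unfolding S_def
      by (intro sum.cong refl) (auto simp: int_sqh1 alpha_bad)
    finally show ?thesis .
  qed
  have El: "integrable M (\<lambda>\<omega>. hh x1 x2 (W l \<omega>)) \<and> (\<integral>\<omega>. hh x1 x2 (W l \<omega>) \<partial>M) = S" if "l \<in> {1..L div 2}" for l
  proof -
    have dl: "distributed M lborel (W l) (\<lambda>w. ennreal (P w))"
      using dist[OF that] unfolding P_def .
    have "integrable M (\<lambda>\<omega>. hh x1 x2 (W l \<omega>))"
      using distributed_integrable[OF dl hh_meas] P_nonneg Ph_int by simp
    moreover have "(\<integral>\<omega>. hh x1 x2 (W l \<omega>) \<partial>M) = S"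
      using distributed_integral[OF dl hh_meas] P_nonneg Ph_integral by simp
    ultimately show ?thesis by simp
  qed
  have "prob_space.expectation M (\<lambda>\<omega>. \<Sum>k<L. phi L (\<lambda>l. W l \<omega>) x1 k * phi L (\<lambda>l. W l \<omega>) x2 k)
      = (\<integral>\<omega>. 1 / (2 * real L) * (\<Sum>l\<in>{1..L div 2}. hh x1 x2 (W l \<omega>)) \<partial>M)"
    by (simp only: phi_sum[OF ev Lp])
  also have "\<dots> = 1 / (2 * real L) * (\<Sum>l\<in>{1..L div 2}. (\<integral>\<omega>. hh x1 x2 (W l \<omega>) \<partial>M))"
    using El by (simp add: Bochner_Integration.integral_sum)
  also have "\<dots> = 1 / (2 * real L) * (real (L div 2) * S)"
    using El by simp
  also have "\<dots> = S / 4"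
    using ev Lp by (auto elim!: evenE simp: field_simps)
  also have "\<dots> = k_ngsm Q alpha mu1 mu2 s1 s2 rho x1 x2"
    unfolding k_ngsm_kbr S_def by simp
  finally show ?thesis .
qed

end
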